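(* Let $F$ be a field of characteristic different from $2$, $Q_1,\dots,Q_4$ quaternion $F$-algebras with canonical involutions $\gamma_i$, $(D,\gamma)=(Q_1,\gamma_1)\otimes(Q_2,\gamma_2)$, and $u\in D$ invertible with $\gamma(u)=u$ and $\mathrm{Trd}_D(u)=0$, together with an isomorphism $\phi:(Q_3,\gamma_3)\otimes(Q_4,\gamma_4)\xrightarrow{\sim}(D,\mathrm{Int}(u^{-1})\circ\gamma)$. For a pure quaternion $q\in Q_4^0$, let $W_q=\phi(\{x\otimes q: x\in Q_3^0\})$. Then $\gamma(W_q)$ is a totally isotropic subspace of $D$ for the quadratic form $q_u(x)=\mathrm{Trd}_D(xu\gamma(x))$.
   Context: The canonical involution of a quaternion algebra $Q$ is $\gamma_Q(x)=\mathrm{Trd}_Q(x)-x$; $Q^0=\{x\in Q:\mathrm{Trd}_Q(x)=0\}$ is the space of pure quaternions. $\mathrm{Int}(a)(x)=axa^{-1}$; $\mathrm{Trd}_D$ is the reduced trace of $D$. *)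

theory Defs
  imports Main
begin

text \<open>Quaternion algebra (a,b)_F over a field F (char F \<noteq> 2), a, b nonzero,
  with F-basis e_(p,q) = i^p j^q for p, q :: bool, i.e. 1, i, j, k = ij,
  where i^2 = a, j^2 = b, ij = -ji.\<close>

type_synonym 'a quat = "bool \<times> bool \<Rightarrow> 'a"

text \<open>Tensor product Q1 \<otimes> Q2 with F-basis e_\<alpha> \<otimes> f_\<beta>.\<close>
type_synonym 'a biquat = "(bool \<times> bool) \<times> (bool \<times> bool) \<Rightarrow> 'a"

definition bxor :: "bool \<times> bool \<Rightarrow> bool \<times> bool \<Rightarrow> bool \<times> bool" where
  "bxor \<alpha> \<beta> = (fst \<alpha> \<noteq> fst \<beta>, snd \<alpha> \<noteq> snd \<beta>)"

text \<open>Structure constants: e_(p,q) e_(p',q') = qsign a b (p,q) (p',q') e_(p xor p', q xor q').\<close>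
definition qsign :: "'a::field \<Rightarrow> 'a \<Rightarrow> bool \<times> bool \<Rightarrow> bool \<times> bool \<Rightarrow> 'a" where
  "qsign a b \<alpha> \<beta> =
     (if snd \<alpha> \<and> fst \<beta> then -1 else 1) *
     (if fst \<alpha> \<and> fst \<beta> then a else 1) *
     (if snd \<alpha> \<and> snd \<beta> then b else 1)"

definition qbasis :: "bool \<times> bool \<Rightarrow> 'a::field quat" where
  "qbasis \<alpha> = (\<lambda>\<gamma>. if \<gamma> = \<alpha> then 1 else 0)"

definition qmul :: "'a::field \<Rightarrow> 'a \<Rightarrow> 'a quat \<Rightarrow> 'a quat \<Rightarrow> 'a quat" where
  "qmul a b x y = (\<lambda>\<gamma>. \<Sum>\<alpha>\<in>UNIV. \<Sum>\<beta>\<in>UNIV.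
      if bxor \<alpha> \<beta> = \<gamma> then qsign a b \<alpha> \<beta> * x \<alpha> * y \<beta> else 0)"

definition qtrd :: "'a::field quat \<Rightarrow> 'a" where
  "qtrd x = 2 * x (False, False)"

definition qcanon :: "'a::field quat \<Rightarrow> 'a quat" where
  "qcanon x = (\<lambda>\<gamma>. qtrd x * qbasis (False, False) \<gamma> - x \<gamma>)"

text \<open>Multiplication in (a1,b1)_F \<otimes> (a2,b2)_F:
  (e_\<alpha> \<otimes> f_\<beta>)(e_\<alpha>' \<otimes> f_\<beta>') = (e_\<alpha> e_\<alpha>') \<otimes> (f_\<beta> f_\<beta>').\<close>
definition bmul :: "'a::field \<Rightarrow> 'a \<Rightarrow> 'a \<Rightarrow> 'a \<Rightarrow> 'a biquat \<Rightarrow> 'a biquat \<Rightarrow> 'a biquat" where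
  "bmul a1 b1 a2 b2 X Y = (\<lambda>(\<gamma>, \<delta>). \<Sum>(\<alpha>, \<beta>)\<in>UNIV. \<Sum>(\<alpha>', \<beta>')\<in>UNIV.
      if bxor \<alpha> \<alpha>' = \<gamma> \<and> bxor \<beta> \<beta>' = \<delta>
      then qsign a1 b1 \<alpha> \<alpha>' * qsign a2 b2 \<beta> \<beta>' * X (\<alpha>, \<beta>) * Y (\<alpha>', \<beta>') else 0)"

definition tensor :: "'a::field quat \<Rightarrow> 'a quat \<Rightarrow> 'a biquat" where
  "tensor x y = (\<lambda>(\<alpha>, \<beta>). x \<alpha> * y \<beta>)"

definition bone :: "'a::field biquat" where
  "bone = tensor (qbasis (False, False)) (qbasis (False, False))"

definition tensor_map :: "('a::field quat \<Rightarrow> 'a quat) \<Rightarrow> ('a quat \<Rightarrow> 'a quat) \<Rightarrow> 'a biquat \<Rightarrow> 'a biquat" where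
  "tensor_map f g X = (\<lambda>(\<gamma>, \<delta>). \<Sum>(\<alpha>, \<beta>)\<in>UNIV. f (qbasis \<alpha>) \<gamma> * g (qbasis \<beta>) \<delta> * X (\<alpha>, \<beta>))"

text \<open>Reduced trace of Q1 \<otimes> Q2: Trd_D(x \<otimes> y) = Trd_Q1(x) Trd_Q2(y), extended linearly.\<close>
definition btrd :: "'a::field biquat \<Rightarrow> 'a" where
  "btrd X = (\<Sum>(\<alpha>, \<beta>)\<in>UNIV. qtrd (qbasis \<alpha> :: 'a quat) * qtrd (qbasis \<beta> :: 'a quat) * X (\<alpha>, \<beta>))"

definition is_subspace :: "('b \<Rightarrow> 'a::field) set \<Rightarrow> bool" where
  "is_subspace S \<longleftrightarrow> (\<lambda>_. 0) \<in> S \<and>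
     (\<forall>x\<in>S. \<forall>y\<in>S. (\<lambda>z. x z + y z) \<in> S) \<and>
     (\<forall>c. \<forall>x\<in>S. (\<lambda>z. c * x z) \<in> S)"

definition totally_isotropic :: "(('b \<Rightarrow> 'a::field) \<Rightarrow> 'a) \<Rightarrow> ('b \<Rightarrow> 'a) set \<Rightarrow> bool" where
  "totally_isotropic Q S \<longleftrightarrow> is_subspace S \<and> (\<forall>x\<in>S. Q x = 0)"

end

theory Submission
  imports Defs
begin

type_synonym gidx = "(bool \<times> bool) \<times> (bool \<times> bool)"

definition gx :: "gidx \<Rightarrow> gidx \<Rightarrow> gidx" where
  "gx h g = (bxor (fst h) (fst g), bxor (snd h) (snd g))"

definition bsg :: "'a::field \<Rightarrow> 'a \<Rightarrow> 'a \<Rightarrow> 'a \<Rightarrow> gidx \<Rightarrow> gidx \<Rightarrow> 'a" where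
  "bsg a1 b1 a2 b2 h k = qsign a1 b1 (fst h) (fst k) * qsign a2 b2 (snd h) (snd k)"

lemma gx_gx: "gx h (gx h k) = k"
  by (auto simp: gx_def bxor_def prod_eq_iff)

lemma gx_gx2: "gx (gx h k) (gx h g) = gx k g"
  by (auto simp: gx_def bxor_def prod_eq_iff)

lemma gx_zero: "gx ((False,False),(False,False)) g = g"
  by (auto simp: gx_def bxor_def prod_eq_iff)

lemma gx_self: "gx h g = ((False,False),(False,False)) \<longleftrightarrow> h = g"
  by (auto simp: gx_def bxor_def prod_eq_iff)

lemma qsign_cocycle:
  fixes a b :: "'a::field"
  shows "qsign a b h (bxor h k) * qsign a b k (bxor k g) =
         qsign a b h (bxor h g) * qsign a b (bxor h k) (bxor k g)"
proof -
  obtain p1 p2 where h: "h = (p1,p2)" by force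
  obtain q1 q2 where k: "k = (q1,q2)" by force
  obtain r1 r2 where g: "g = (r1,r2)" by force
  show ?thesis unfolding h k g
    by (cases p1; cases p2; cases q1; cases q2; cases r1; cases r2)
       (simp_all add: qsign_def bxor_def)
qed

lemma bsg_cocycle:
  "bsg a1 b1 a2 b2 h (gx h k) * bsg a1 b1 a2 b2 k (gx k g) =
   bsg a1 b1 a2 b2 h (gx h g) * bsg a1 b1 a2 b2 (gx h k) (gx k g)"
proof -
  have 1: "qsign a1 b1 (fst h) (bxor (fst h) (fst k)) * qsign a1 b1 (fst k) (bxor (fst k) (fst g)) =
         qsign a1 b1 (fst h) (bxor (fst h) (fst g)) * qsign a1 b1 (bxor (fst h) (fst k)) (bxor (fst k) (fst g))"
    by (rule qsign_cocycle)
  have 2: "qsign a2 b2 (snd h) (bxor (snd h) (snd k)) * qsign a2 b2 (snd k) (bxor (snd k) (snd g)) =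
         qsign a2 b2 (snd h) (bxor (snd h) (snd g)) * qsign a2 b2 (bxor (snd h) (snd k)) (bxor (snd k) (snd g))"
    by (rule qsign_cocycle)
  have "bsg a1 b1 a2 b2 h (gx h k) * bsg a1 b1 a2 b2 k (gx k g) =
     (qsign a1 b1 (fst h) (bxor (fst h) (fst k)) * qsign a1 b1 (fst k) (bxor (fst k) (fst g))) *
     (qsign a2 b2 (snd h) (bxor (snd h) (snd k)) * qsign a2 b2 (snd k) (bxor (snd k) (snd g)))"
    by (simp add: bsg_def gx_def ac_simps)
  also have "\<dots> = bsg a1 b1 a2 b2 h (gx h g) * bsg a1 b1 a2 b2 (gx h k) (gx k g)"
    unfolding 1 2 by (simp add: bsg_def gx_def ac_simps)
  finally show ?thesis .
qed

lemma bmul_alt: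
  "bmul a1 b1 a2 b2 X Y = (\<lambda>g. \<Sum>h\<in>UNIV. bsg a1 b1 a2 b2 h (gx h g) * X h * Y (gx h g))"
proof (rule ext)
  fix g :: gidx
  obtain \<gamma> \<delta> where g: "g = (\<gamma>, \<delta>)" by (cases g) blast
  have inner: "(\<Sum>(\<alpha>', \<beta>')\<in>UNIV. if bxor \<alpha> \<alpha>' = \<gamma> \<and> bxor \<beta> \<beta>' = \<delta>
      then qsign a1 b1 \<alpha> \<alpha>' * qsign a2 b2 \<beta> \<beta>' * X (\<alpha>, \<beta>) * Y (\<alpha>', \<beta>') else 0)
     = bsg a1 b1 a2 b2 (\<alpha>,\<beta>) (gx (\<alpha>,\<beta>) g) * X (\<alpha>,\<beta>) * Y (gx (\<alpha>,\<beta>) g)" for \<alpha> \<beta>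
  proof -
    have c: "(bxor \<alpha> \<alpha>' = \<gamma> \<and> bxor \<beta> \<beta>' = \<delta>) = ((\<alpha>',\<beta>') = gx (\<alpha>,\<beta>) g)" for \<alpha>' \<beta>'
      unfolding g gx_def bxor_def prod_eq_iff by auto
    have "(\<Sum>(\<alpha>', \<beta>')\<in>UNIV. if bxor \<alpha> \<alpha>' = \<gamma> \<and> bxor \<beta> \<beta>' = \<delta>
      then qsign a1 b1 \<alpha> \<alpha>' * qsign a2 b2 \<beta> \<beta>' * X (\<alpha>, \<beta>) * Y (\<alpha>', \<beta>') else 0)
      = (\<Sum>k\<in>UNIV. if k = gx (\<alpha>,\<beta>) g then bsg a1 b1 a2 b2 (\<alpha>,\<beta>) k * X (\<alpha>,\<beta>) * Y k else 0)"
    proof (rule sum.cong[OF refl])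
      fix k :: gidx
      obtain \<alpha>' \<beta>' where k: "k = (\<alpha>', \<beta>')" by (cases k) blast
      show "(case k of (\<alpha>', \<beta>') \<Rightarrow> if bxor \<alpha> \<alpha>' = \<gamma> \<and> bxor \<beta> \<beta>' = \<delta>
      then qsign a1 b1 \<alpha> \<alpha>' * qsign a2 b2 \<beta> \<beta>' * X (\<alpha>, \<beta>) * Y (\<alpha>', \<beta>') else 0) =
        (if k = gx (\<alpha>,\<beta>) g then bsg a1 b1 a2 b2 (\<alpha>,\<beta>) k * X (\<alpha>,\<beta>) * Y k else 0)"
        unfolding k c[symmetric] by (simp add: bsg_def)
    qed
    then show ?thesis by simp
  qed
  have "bmul a1 b1 a2 b2 X Y g = (\<Sum>h\<in>UNIV. case h of (\<alpha>,\<beta>) \<Rightarrow> bsg a1 b1 a2 b2 (\<alpha>,\<beta>) (gx (\<alpha>,\<beta>) g) * X (\<alpha>,\<beta>) * Y (gx (\<alpha>,\<beta>) g))"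
    unfolding bmul_def g by (simp only: prod.case inner[unfolded g])
  then show "bmul a1 b1 a2 b2 X Y g = (\<Sum>h\<in>UNIV. bsg a1 b1 a2 b2 h (gx h g) * X h * Y (gx h g))"
    by (simp add: case_prod_beta')
qed


lemma sum_reidx: "(\<Sum>m\<in>UNIV. f m) = (\<Sum>k\<in>UNIV. f (gx h k))"
  by (rule sum.reindex_bij_witness[where i="gx h" and j="gx h"]) (auto simp: gx_gx)

lemma bmul_assoc:
  "bmul A B C D (bmul A B C D X Y) Z = bmul A B C D X (bmul A B C D Y Z)"
proof (rule ext)
  fix g :: gidx
  let ?s = "bsg A B C D"
  have "bmul A B C D (bmul A B C D X Y) Z g =
    (\<Sum>k\<in>UNIV. \<Sum>h\<in>UNIV. ?s k (gx k g) * ?s h (gx h k) * X h * Y (gx h k) * Z (gx k g))"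
    by (simp add: bmul_alt sum_distrib_left sum_distrib_right ac_simps)
  also have "\<dots> = (\<Sum>h\<in>UNIV. \<Sum>k\<in>UNIV. ?s k (gx k g) * ?s h (gx h k) * X h * Y (gx h k) * Z (gx k g))"
    by (rule sum.swap)
  also have "\<dots> = (\<Sum>h\<in>UNIV. \<Sum>k\<in>UNIV. ?s h (gx h g) * ?s (gx h k) (gx k g) * X h * Y (gx h k) * Z (gx k g))"
    using bsg_cocycle[of A B C D] by (simp add: ac_simps)
  also have "\<dots> = (\<Sum>h\<in>UNIV. ?s h (gx h g) * X h * (\<Sum>k\<in>UNIV. ?s (gx h k) (gx (gx h k) (gx h g)) * Y (gx h k) * Z (gx (gx h k) (gx h g))))"
    by (simp add: gx_gx2 sum_distrib_left ac_simps)
  also have "\<dots> = (\<Sum>h\<in>UNIV. ?s h (gx h g) * X h * (\<Sum>m\<in>UNIV. ?s m (gx m (gx h g)) * Y m * Z (gx m (gx h g))))"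
    apply (rule sum.cong[OF refl])
    subgoal for h
      using sum_reidx[of "\<lambda>m. ?s m (gx m (gx h g)) * Y m * Z (gx m (gx h g))" h] by simp
    done
  also have "\<dots> = bmul A B C D X (bmul A B C D Y Z) g"
    by (simp add: bmul_alt)
  finally show "bmul A B C D (bmul A B C D X Y) Z g = bmul A B C D X (bmul A B C D Y Z) g" .
qed

definition z0 :: gidx where "z0 = ((False,False),(False,False))"

lemma gx_same: "gx g g = z0"
  by (auto simp: gx_def bxor_def z0_def)

lemma bone_alt: "bone = (\<lambda>g. if g = z0 then 1 else 0)"
  by (auto simp: bone_def tensor_def qbasis_def z0_def fun_eq_iff)

lemma bsg_z0: "bsg A B C D z0 g = 1" "bsg A B C D g z0 = 1"
  by (auto simp: bsg_def qsign_def z0_def)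

lemma bmul_one_left: "bmul A B C D bone X = X"
proof (rule ext)
  fix g
  have "bmul A B C D bone X g = (\<Sum>h\<in>UNIV. if h = z0 then bsg A B C D z0 (gx z0 g) * X (gx z0 g) else 0)"
    unfolding bmul_alt bone_alt by (rule sum.cong) auto
  also have "\<dots> = X g" by (simp add: bsg_z0 gx_zero[folded z0_def])
  finally show "bmul A B C D bone X g = X g" .
qed

lemma bmul_scal_right: "bmul A B C D X (\<lambda>z. c * bone z) = (\<lambda>z. c * X z)"
proof (rule ext)
  fix g
  have "bmul A B C D X (\<lambda>z. c * bone z) g = (\<Sum>h\<in>UNIV. if h = g then bsg A B C D g z0 * X g * c else 0)"
    unfolding bmul_alt bone_alt by (rule sum.cong) (auto simp: gx_self[folded z0_def] gx_same)
  also have "\<dots> = c * X g" by (simp add: bsg_z0)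
  finally show "bmul A B C D X (\<lambda>z. c * bone z) g = c * X g" .
qed

definition qe :: "bool \<times> bool \<Rightarrow> 'a::field" where
  "qe \<alpha> = (if \<alpha> = (False, False) then 1 else -1)"

lemma qcanon_basis: "qcanon (qbasis \<alpha>) \<gamma> = (if \<gamma> = \<alpha> then (qe \<alpha> :: 'a::field) else 0)"
  by (auto simp: qcanon_def qtrd_def qbasis_def qe_def)

lemma gam_alt: "tensor_map qcanon qcanon X = (\<lambda>g. (qe (fst g) * qe (snd g) :: 'a::field) * X g)"
proof (rule ext)
  fix g :: gidx
  obtain \<gamma> \<delta> where g: "g = (\<gamma>, \<delta>)" by (cases g) blast
  have "tensor_map qcanon qcanon X g = (\<Sum>h\<in>UNIV. if h = g then qe (fst g) * qe (snd g) * X g else 0)"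
    unfolding tensor_map_def g prod.case by (rule sum.cong) (auto simp: qcanon_basis split: if_splits)
  then show "tensor_map qcanon qcanon X g = qe (fst g) * qe (snd g) * X g" by simp
qed

lemma qe_sq: "qe a * qe a = (1::'a::field)" by (simp add: qe_def)

lemma gam_gam: "tensor_map qcanon qcanon (tensor_map qcanon qcanon X) = (X :: 'a::field biquat)"
proof -
  have h: "qe (fst g) * qe (snd g) * (qe (fst g) * qe (snd g) * X g) = X g" for g
  proof -
    have "qe (fst g) * qe (snd g) * (qe (fst g) * qe (snd g) * X g) = (qe (fst g) * qe (fst g)) * (qe (snd g) * qe (snd g)) * (X g :: 'a)"
      by (simp add: ac_simps)
    then show ?thesis by (simp add: qe_sq)
  qed
  show ?thesis unfolding gam_alt by (rule ext) (rule h)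
qed

lemma btrd_scal: "btrd (\<lambda>z. c * X z) = c * btrd X"
  by (simp add: btrd_def sum_distrib_left case_prod_beta' ac_simps)


lemma UNIV_bb: "(UNIV :: (bool \<times> bool) set) = {(False,False),(False,True),(True,False),(True,True)}"
  by (auto simp: UNIV_bool)

lemma sum_bb: "(\<Sum>h\<in>(UNIV :: (bool \<times> bool) set). f h) = f (False,False) + f (False,True) + f (True,False) + f (True,True)"
  by (simp add: UNIV_bb ac_simps)

lemma sum_g: "(\<Sum>h\<in>(UNIV :: gidx set). f h) = (\<Sum>a\<in>UNIV. \<Sum>b\<in>UNIV. f (a,b))"
  by (simp add: UNIV_Times_UNIV[symmetric] sum.cartesian_product del: UNIV_Times_UNIV)

lemma tensor_sq:
  fixes x q :: "'a::field quat"
  assumes "(2::'a) \<noteq> 0" "qtrd x = 0" "qtrd q = 0"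
  shows "bmul A B C D (tensor x q) (tensor x q) =
    (\<lambda>z. ((A * x (True,False)^2 + B * x (False,True)^2 - A * B * x (True,True)^2) *
          (C * q (True,False)^2 + D * q (False,True)^2 - C * D * q (True,True)^2)) * bone z)"
proof (rule ext)
  fix g :: gidx
  have x0: "x (False,False) = 0" and q0: "q (False,False) = 0"
    using assms by (auto simp: qtrd_def)
  obtain a1 a2 b1 b2 where g: "g = ((a1,a2),(b1,b2))" by (cases g) auto
  show "bmul A B C D (tensor x q) (tensor x q) g =
    ((A * x (True,False)^2 + B * x (False,True)^2 - A * B * x (True,True)^2) *
          (C * q (True,False)^2 + D * q (False,True)^2 - C * D * q (True,True)^2)) * bone g"
    unfolding bmul_alt sum_g sum_bb g
    by (cases a1; cases a2; cases b1; cases b2)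
       (simp_all add: x0 q0 tensor_def bone_alt z0_def gx_def bxor_def bsg_def qsign_def algebra_simps power2_eq_square)
qed

theorem claim4p5:
  fixes a1 b1 a2 b2 a3 b3 a4 b4 :: "'a::field"
    and u v :: "'a biquat"
    and \<phi> :: "'a biquat \<Rightarrow> 'a biquat"
    and q :: "'a quat"
  assumes char: "(2::'a) \<noteq> 0"
    and nz: "a1 \<noteq> 0" "b1 \<noteq> 0" "a2 \<noteq> 0" "b2 \<noteq> 0"
            "a3 \<noteq> 0" "b3 \<noteq> 0" "a4 \<noteq> 0" "b4 \<noteq> 0"
    and u_inv: "bmul a1 b1 a2 b2 u v = bone" "bmul a1 b1 a2 b2 v u = bone"
    and u_sym: "tensor_map qcanon qcanon u = u"
    and u_trd: "btrd u = 0"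
    and phi_bij: "bij \<phi>"
    and phi_add: "\<forall>X Y. \<phi> (\<lambda>z. X z + Y z) = (\<lambda>z. \<phi> X z + \<phi> Y z)"
    and phi_smult: "\<forall>c X. \<phi> (\<lambda>z. c * X z) = (\<lambda>z. c * \<phi> X z)"
    and phi_mult: "\<forall>X Y. \<phi> (bmul a3 b3 a4 b4 X Y) = bmul a1 b1 a2 b2 (\<phi> X) (\<phi> Y)"
    and phi_one: "\<phi> bone = bone"
    and phi_inv: "\<forall>X. \<phi> (tensor_map qcanon qcanon X) =
                     bmul a1 b1 a2 b2 (bmul a1 b1 a2 b2 v (tensor_map qcanon qcanon (\<phi> X))) u"
    and q_pure: "qtrd q = 0"
  shows "totally_isotropic
           (\<lambda>x. btrd (bmul a1 b1 a2 b2 (bmul a1 b1 a2 b2 x u) (tensor_map qcanon qcanon x)))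
           (tensor_map qcanon qcanon ` \<phi> ` {tensor x q | x. qtrd x = 0})"
proof -
  let ?gam = "tensor_map qcanon qcanon :: 'a biquat \<Rightarrow> 'a biquat"
  let ?m = "bmul a1 b1 a2 b2"
  let ?T = "{tensor x q | x. qtrd x = 0}"
  have phi0: "\<phi> (\<lambda>z. 0) = (\<lambda>z. 0)"
    using phi_smult[rule_format, of 0 "\<lambda>z. 0"] by simp
  have gam_add: "?gam (\<lambda>z. A z + B z) = (\<lambda>z. ?gam A z + ?gam B z)" for A B
    by (simp add: gam_alt algebra_simps)
  have gam_smult: "?gam (\<lambda>z. c * A z) = (\<lambda>z. c * ?gam A z)" for c A
    by (simp add: gam_alt algebra_simps)
  have ten_add: "tensor (\<lambda>z. x z + x' z) q = (\<lambda>z. tensor x q z + tensor x' q z)" for x x'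
    by (auto simp: tensor_def algebra_simps)
  have ten_smult: "tensor (\<lambda>z. c * x z) q = (\<lambda>z. c * tensor x q z)" for c x
    by (auto simp: tensor_def algebra_simps)
  have sub: "is_subspace (?gam ` \<phi> ` ?T)"
    unfolding is_subspace_def
  proof (intro conjI ballI allI)
    have "tensor (\<lambda>z. 0) q = (\<lambda>z. 0)" by (auto simp: tensor_def)
    moreover have "qtrd (\<lambda>z::bool\<times>bool. 0::'a) = 0" by (simp add: qtrd_def)
    ultimately have "(\<lambda>z. 0) \<in> ?T" by force
    moreover have "?gam (\<lambda>z. 0) = (\<lambda>z. 0)" by (simp add: gam_alt)
    ultimately show "(\<lambda>z. 0) \<in> ?gam ` \<phi> ` ?T" using phi0 by force
  next
    fix w1 w2 assume "w1 \<in> ?gam ` \<phi> ` ?T" "w2 \<in> ?gam ` \<phi> ` ?T"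
    then obtain x1 x2 where x: "qtrd x1 = 0" "qtrd x2 = 0"
      "w1 = ?gam (\<phi> (tensor x1 q))" "w2 = ?gam (\<phi> (tensor x2 q))" by blast
    have "qtrd (\<lambda>z. x1 z + x2 z) = qtrd x1 + qtrd x2" by (simp add: qtrd_def distrib_left)
    then have "qtrd (\<lambda>z. x1 z + x2 z) = 0" using x by simp
    moreover have "(\<lambda>z. w1 z + w2 z) = ?gam (\<phi> (tensor (\<lambda>z. x1 z + x2 z) q))"
      unfolding ten_add phi_add[rule_format] gam_add x ..
    ultimately show "(\<lambda>z. w1 z + w2 z) \<in> ?gam ` \<phi> ` ?T" by blast
  next
    fix c w assume "w \<in> ?gam ` \<phi> ` ?T"
    then obtain x where x: "qtrd x = 0" "w = ?gam (\<phi> (tensor x q))" by blast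
    have "qtrd (\<lambda>z. c * x z) = 0" using x by (simp add: qtrd_def algebra_simps)
    moreover have "(\<lambda>z. c * w z) = ?gam (\<phi> (tensor (\<lambda>z. c * x z) q))"
      unfolding ten_smult phi_smult[rule_format] gam_smult x ..
    ultimately show "(\<lambda>z. c * w z) \<in> ?gam ` \<phi> ` ?T" by blast
  qed
  have iso: "btrd (?m (?m w u) (?gam w)) = 0" if w: "w \<in> ?gam ` \<phi> ` ?T" for w
  proof -
    obtain x where x: "qtrd x = 0" "w = ?gam (\<phi> (tensor x q))" using w by blast
    define X where "X = tensor x q"
    define y where "y = \<phi> X"
    have x0: "x (False,False) = 0" and q0: "q (False,False) = 0"
      using x q_pure char by (auto simp: qtrd_def)
    have gX: "?gam X = X"
    proof (rule ext)
      fix g :: gidx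
      show "?gam X g = X g"
        unfolding gam_alt X_def tensor_def
        by (cases "fst g = (False,False)"; cases "snd g = (False,False)")
           (auto simp: qe_def x0 q0 case_prod_beta')
    qed
    have ysym: "y = ?m (?m v (?gam y)) u"
      using phi_inv[rule_format, of X] unfolding gX y_def .
    have comm: "?m (?gam y) u = ?m u y"
    proof -
      have "?m u y = ?m u (?m (?m v (?gam y)) u)" using ysym by simp
      also have "\<dots> = ?m (?m (?m u v) (?gam y)) u" by (simp add: bmul_assoc)
      also have "\<dots> = ?m (?gam y) u" by (simp add: u_inv bmul_one_left)
      finally show ?thesis by simp
    qed
    obtain c where c: "bmul a3 b3 a4 b4 X X = (\<lambda>z. c * bone z)"
      using tensor_sq[OF char x(1) q_pure, of a3 b3 a4 b4] unfolding X_def by blast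
    have yy: "?m y y = (\<lambda>z. c * bone z)"
      unfolding y_def phi_mult[rule_format, symmetric] c phi_smult[rule_format] phi_one ..
    have "btrd (?m (?m w u) (?gam w)) = btrd (?m (?m u y) y)"
      unfolding x(2) X_def[symmetric] y_def[symmetric] gam_gam comm ..
    also have "\<dots> = btrd (?m u (?m y y))" by (simp add: bmul_assoc)
    also have "\<dots> = c * btrd u" by (simp add: yy bmul_scal_right btrd_scal)
    finally show ?thesis using u_trd by simp
  qed
  show ?thesis unfolding totally_isotropic_def using sub iso by blast
qed

end
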